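(* Let $G=(V,E)$ be a finite graph with a staggered quantum walk given by tessellations $\mathcal{T}_1,\dots,\mathcal{T}_l$ (each polygon $P$ carrying a unit vector $\ket{P}=\sum_{v\in P}c_v^{(P)}\ket{v}$ supported on $P$), with local operators $U_j=2\sum_{P\in\mathcal{T}_j}\ket{P}\bra{P}-I$ on $\mathcal{H}^{|V|}$. Fix a vertex $u\in V$, and for each $j$ let $P_j$ be the polygon of $\mathcal{T}_j$ containing $u$, with $\ket{P_j}=\sum_{v\in P_j}c_v^{(j)}\ket{v}$. Let $\tilde G=(\tilde V,\tilde E)$, $\tilde V=\{0,1,\dots,k-1\}\cup (V\setminus\{u\})$, be the graph obtained by replacing $u$ with a $k$-clique on new vertices $0,\dots,k-1$, each adjacent to every neighbour of $u$ in $G$. Fix a unit vector $\ket{\tilde u}=\sum_{i=0}^{k-1}u_i\ket{i}\in\mathcal{H}^{|\tilde V|}$. Define the staggered quantum walk on $\tilde G$ with tessellations $\tilde{\mathcal{T}}_j$ obtained from $\mathcal{T}_j$ by replacing $P_j$ with $\tilde P_j=(P_j\setminus\{u\})\cup\{0,\dots,k-1\}$ and keeping all other polygons, where $\ket{\tilde P_j}=\sum_{v\in P_j\setminus\{u\}}c_v^{(j)}\ket{v}+c_u^{(j)}\ket{\tilde u}$ and every other polygon keeps its vector; set $\tilde U_j=2\sum_{\tilde P\in\tilde{\mathcal{T}}_j}\ket{\tilde P}\bra{\tilde P}-I$ on $\mathcal{H}^{|\tilde V|}$. Let $\ket{\psi}=\sum_{v\in V}a_v\ket{v}\in\mathcal{H}^{|V|}$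 be arbitrary and define $\ket{\tilde\psi}=\sum_{v\in V\setminus\{u\}}a_v\ket{v}+a_u\ket{\tilde u}\in\mathcal{H}^{|\tilde V|}$. Then for every $j\in\{1,\dots,l\}$, $$\braket{v|\tilde U_j|\tilde\psi}=\braket{v|U_j|\psi}\quad\text{for all } v\in V\setminus\{u\},\qquad \braket{\tilde u|\tilde U_j|\tilde\psi}=\braket{u|U_j|\psi}.$$ In particular, the local operators preserve the amplitudes of all vertices outside the intersection, and the probability of measuring (in the computational basis) $u$ after applying $U_j$ to $\ket\psi$ equals the probability of measuring one of the clique vertices $0,\dots,k-1$ after applying $\tilde U_j$ to $\ket{\tilde\psi}$.
   Context: A tessellation of a graph is a partition of its vertex set into cliques, called polygons; a tessellation cover is a set of tessellations such that every edge has both endpoints in a common polygon of some tessellation. A staggered quantum walk (SQW) on a graph with tessellation cover $\{\mathcal{T}_1,\dots,\mathcal{T}_l\}$ assigns to each polygon $P$ a unit vector $\ket{P}$ in the Hilbert space spanned by the computational basis $\{\ket{v}\}$ of vertices, supported on the vertices of $P$; its local operators are the reflections $U_j=2\sum_{P\in\mathcal{T}_j}\ket P\bra P-I$ and its evolution operator is $U=U_1U_2\cdots U_l$. Since each tessellation is a partition, $u$ lies in exactly one polygon $P_j$ of each $\mathcal{T}_j$. The same pair of walks arises in the "intersection reduction" direction: a SQW on $\tilde G$ in which the $k$ vertices of an intersection $I=\tilde P_1\cap\dots\cap\tilde P_l$ have, in every $\ket{\tilde P_j}$, amplitudes proportional to a common unit vector $\ket{\tilde u}$ supported on $I$, is reduced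 by collapsing $I$ to a single vertex $u$ and replacing $\ket{\tilde u}$ by $\ket u$. Inner products are conjugate-linear in the first argument. *)

theory Defs
  imports Complex_Main
begin

definition simple_graph :: "'a set \<Rightarrow> ('a \<Rightarrow> 'a \<Rightarrow> bool) \<Rightarrow> bool" where
  "simple_graph V E \<longleftrightarrow> finite V \<and>
     (\<forall>x y. E x y \<longrightarrow> x \<in> V \<and> y \<in> V \<and> x \<noteq> y \<and> E y x)"

definition tessellation :: "'a set \<Rightarrow> ('a \<Rightarrow> 'a \<Rightarrow> bool) \<Rightarrow> 'a set set \<Rightarrow> bool" where
  "tessellation V E T \<longleftrightarrow>
     (\<forall>P\<in>T. P \<noteq> {} \<and> P \<subseteq> V) \<and> \<Union>T = V \<and>
     (\<forall>P\<in>T. \<forall>Q\<in>T. P \<noteq> Q \<longrightarrow> P \<inter> Q = {}) \<and>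
     (\<forall>P\<in>T. \<forall>x\<in>P. \<forall>y\<in>P. x \<noteq> y \<longrightarrow> E x y)"

definition tessellation_cover :: "'a set \<Rightarrow> ('a \<Rightarrow> 'a \<Rightarrow> bool) \<Rightarrow> 'a set set list \<Rightarrow> bool" where
  "tessellation_cover V E Ts \<longleftrightarrow>
     (\<forall>T\<in>set Ts. tessellation V E T) \<and>
     (\<forall>x y. E x y \<longrightarrow> (\<exists>T\<in>set Ts. \<exists>P\<in>T. x \<in> P \<and> y \<in> P))"

definition braket :: "'a set \<Rightarrow> ('a \<Rightarrow> complex) \<Rightarrow> ('a \<Rightarrow> complex) \<Rightarrow> complex" where
  "braket S x y = (\<Sum>v\<in>S. cnj (x v) * y v)"

definition polygon_vector :: "'a set \<Rightarrow> ('a \<Rightarrow> complex) \<Rightarrow> bool" where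
  "polygon_vector P c \<longleftrightarrow> (\<forall>v. v \<notin> P \<longrightarrow> c v = 0) \<and> (\<Sum>v\<in>P. (cmod (c v))\<^sup>2) = 1"

text \<open>Local operator U = 2 \<Sum>_{P\<in>T} |P\<rangle>\<langle>P| - I on the space indexed by V,
  applied to a vector psi; c P is the vector |P\<rangle> of polygon P.\<close>
definition local_op :: "'a set \<Rightarrow> 'a set set \<Rightarrow> ('a set \<Rightarrow> 'a \<Rightarrow> complex)
    \<Rightarrow> ('a \<Rightarrow> complex) \<Rightarrow> ('a \<Rightarrow> complex)" where
  "local_op V T c psi = (\<lambda>w. 2 * (\<Sum>P\<in>T. c P w * braket V (c P) psi) - psi w)"

text \<open>Vertex set of the expanded graph: Inl v for v \<in> V - {u}, Inr i for clique vertex i < k.\<close>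
definition tilde_vertices :: "'a set \<Rightarrow> 'a \<Rightarrow> nat \<Rightarrow> ('a + nat) set" where
  "tilde_vertices V u k = Inl ` (V - {u}) \<union> Inr ` {..<k}"

fun tilde_edges :: "('a \<Rightarrow> 'a \<Rightarrow> bool) \<Rightarrow> 'a \<Rightarrow> nat \<Rightarrow> ('a + nat) \<Rightarrow> ('a + nat) \<Rightarrow> bool" where
  "tilde_edges E u k (Inl x) (Inl y) = (E x y \<and> x \<noteq> u \<and> y \<noteq> u)"
| "tilde_edges E u k (Inl x) (Inr i) = (E x u \<and> i < k)"
| "tilde_edges E u k (Inr i) (Inl y) = (E u y \<and> i < k)"
| "tilde_edges E u k (Inr i) (Inr j) = (i \<noteq> j \<and> i < k \<and> j < k)"

definition lift_set :: "'a \<Rightarrow> nat \<Rightarrow> 'a set \<Rightarrow> ('a + nat) set" where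
  "lift_set u k P = (if u \<in> P then Inl ` (P - {u}) \<union> Inr ` {..<k} else Inl ` P)"

text \<open>Lifted vector: \<Sum>_{v \<noteq> u} x_v |v\<rangle> + x_u |ut\<rangle>.\<close>
definition lift_vec :: "'a \<Rightarrow> (nat \<Rightarrow> complex) \<Rightarrow> ('a \<Rightarrow> complex) \<Rightarrow> ('a + nat \<Rightarrow> complex)" where
  "lift_vec u ut x = (\<lambda>w. case w of Inl v \<Rightarrow> (if v = u then 0 else x v) | Inr i \<Rightarrow> x u * ut i)"

text \<open>The vector |ut\<rangle> viewed in the Hilbert space of the expanded graph.\<close>
definition clique_vec :: "(nat \<Rightarrow> complex) \<Rightarrow> ('a + nat \<Rightarrow> complex)" where
  "clique_vec ut = (\<lambda>w. case w of Inl _ \<Rightarrow> 0 | Inr i \<Rightarrow> ut i)"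

end

theory Submission
  imports Defs
begin

lemma braket_lift:
  assumes fin: "finite V" and uV: "u \<in> V" and ut_unit: "(\<Sum>i<k. (cmod (ut i))\<^sup>2) = 1"
  shows "braket (tilde_vertices V u k) (lift_vec u ut x) (lift_vec u ut y) = braket V x y"
proof -
  have d: "Inl ` (V - {u}) \<inter> Inr ` {..<k} = {}" by auto
  have "braket (tilde_vertices V u k) (lift_vec u ut x) (lift_vec u ut y)
      = (\<Sum>w\<in>Inl ` (V - {u}). cnj (lift_vec u ut x w) * lift_vec u ut y w)
      + (\<Sum>w\<in>Inr ` {..<k}. cnj (lift_vec u ut x w) * lift_vec u ut y w)"
    unfolding braket_def tilde_vertices_def
    by (rule sum.union_disjoint) (use fin d in auto)
  also have "(\<Sum>w\<in>Inl ` (V - {u}). cnj (lift_vec u ut x w) * lift_vec u ut y w)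
      = (\<Sum>v\<in>V - {u}. cnj (x v) * y v)"
    by (subst sum.reindex) (auto simp: inj_on_def lift_vec_def intro!: sum.cong)
  also have "(\<Sum>w\<in>Inr ` {..<k}. cnj (lift_vec u ut x w) * lift_vec u ut y w)
      = (\<Sum>i<k. cnj (x u) * y u * (cnj (ut i) * ut i))"
    by (subst sum.reindex) (auto simp: inj_on_def lift_vec_def intro!: sum.cong)
  also have "\<dots> = cnj (x u) * y u * (\<Sum>i<k. cnj (ut i) * ut i)"
    by (simp add: sum_distrib_left)
  also have "(\<Sum>i<k. cnj (ut i) * ut i) = (\<Sum>i<k. complex_of_real ((cmod (ut i))\<^sup>2))"
    by (intro sum.cong refl) (metis complex_norm_square mult.commute of_real_power)
  also have "\<dots> = 1" using ut_unit by (metis of_real_1 of_real_sum)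
  finally show ?thesis
    unfolding braket_def using fin uV by (simp add: sum.remove add.commute)
qed

theorem theorem1:
  fixes V :: "'a set" and E :: "'a \<Rightarrow> 'a \<Rightarrow> bool"
    and Ts :: "'a set set list"
    and c :: "nat \<Rightarrow> 'a set \<Rightarrow> 'a \<Rightarrow> complex"
    and u :: 'a and k :: nat and ut :: "nat \<Rightarrow> complex"
    and ct :: "nat \<Rightarrow> ('a + nat) set \<Rightarrow> ('a + nat) \<Rightarrow> complex"
    and psi :: "'a \<Rightarrow> complex" and j :: nat
  assumes graph: "simple_graph V E"
    and cover: "tessellation_cover V E Ts"
    and pvec: "\<forall>i < length Ts. \<forall>P \<in> Ts ! i. polygon_vector P (c i P)"
    and uV: "u \<in> V"
    and ut_supp: "\<forall>i \<ge> k. ut i = 0"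
    and ut_unit: "(\<Sum>i<k. (cmod (ut i))\<^sup>2) = 1"
    and ct_def: "\<forall>i < length Ts. \<forall>P \<in> Ts ! i. ct i (lift_set u k P) = lift_vec u ut (c i P)"
    and j: "j < length Ts"
  shows "(\<forall>v \<in> V - {u}.
            local_op (tilde_vertices V u k) (lift_set u k ` (Ts ! j)) (ct j) (lift_vec u ut psi) (Inl v)
            = local_op V (Ts ! j) (c j) psi v)
       \<and> braket (tilde_vertices V u k) (clique_vec ut)
            (local_op (tilde_vertices V u k) (lift_set u k ` (Ts ! j)) (ct j) (lift_vec u ut psi))
         = local_op V (Ts ! j) (c j) psi u
       \<and> (\<Sum>i<k. (cmod (local_op (tilde_vertices V u k) (lift_set u k ` (Ts ! j)) (ct j)
                          (lift_vec u ut psi) (Inr i)))\<^sup>2)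
         = (cmod (local_op V (Ts ! j) (c j) psi u))\<^sup>2"
proof -
  define T where "T = Ts ! j"
  have fin: "finite V" using graph by (simp add: simple_graph_def)
  have tess: "tessellation V E T" using cover j unfolding T_def tessellation_cover_def by auto
  have TP: "T \<subseteq> Pow V" using tess unfolding tessellation_def by auto
  have finT: "finite T" using TP fin by (meson finite_Pow_iff finite_subset)
  have ne: "\<forall>P\<in>T. P \<noteq> {}" and dj: "\<forall>P\<in>T. \<forall>Q\<in>T. P \<noteq> Q \<longrightarrow> P \<inter> Q = {}"
    using tess unfolding tessellation_def by auto
  have k0: "k > 0" using ut_unit by (cases k) auto
  have inj: "inj_on (lift_set u k) T"
  proof (rule inj_onI)
    fix P Q assume P: "P \<in> T" and Q: "Q \<in> T" and eq: "lift_set u k P = lift_set u k Q"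
    show "P = Q"
    proof (rule ccontr)
      assume "P \<noteq> Q"
      hence d: "P \<inter> Q = {}" using dj P Q by auto
      obtain p where p: "p \<in> P" using ne P by auto
      obtain q where q: "q \<in> Q" using ne Q by auto
      show False
      proof (cases "u \<in> P")
        case True
        hence "u \<notin> Q" using d by auto
        hence "Inr 0 \<in> lift_set u k P" "Inr 0 \<notin> lift_set u k Q"
          using True k0 by (auto simp: lift_set_def)
        thus False using eq by simp
      next
        case False
        hence "Inl p \<in> lift_set u k P" using p by (auto simp: lift_set_def)
        hence "Inl p \<in> lift_set u k Q" using eq by simp
        hence "p \<in> Q" by (auto simp: lift_set_def split: if_splits)
        thus False using d p by auto
      qed
    qed
  qed
  have key: "local_op (tilde_vertices V u k) (lift_set u k ` T) (ct j) (lift_vec u ut psi)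
      = lift_vec u ut (local_op V T (c j) psi)"
  proof
    fix w
    have "(\<Sum>P\<in>lift_set u k ` T. ct j P w * braket (tilde_vertices V u k) (ct j P) (lift_vec u ut psi))
       = (\<Sum>P\<in>T. lift_vec u ut (c j P) w * braket V (c j P) psi)"
      apply (subst sum.reindex[OF inj])
      apply (rule sum.cong[OF refl])
      using ct_def j braket_lift[OF fin uV ut_unit] unfolding T_def by simp
    thus "local_op (tilde_vertices V u k) (lift_set u k ` T) (ct j) (lift_vec u ut psi) w
      = lift_vec u ut (local_op V T (c j) psi) w"
      unfolding local_op_def
      by (cases w) (auto simp: lift_vec_def sum_distrib_left sum_distrib_right algebra_simps sum.distrib)
  qed
  have cl: "braket (tilde_vertices V u k) (clique_vec ut) (lift_vec u ut x) = x u" for x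
  proof -
    have d: "Inl ` (V - {u}) \<inter> Inr ` {..<k} = {}" by auto
    have "braket (tilde_vertices V u k) (clique_vec ut) (lift_vec u ut x)
      = (\<Sum>w\<in>Inl ` (V - {u}). cnj (clique_vec ut w) * lift_vec u ut x w)
      + (\<Sum>w\<in>Inr ` {..<k}. cnj (clique_vec ut w) * lift_vec u ut x w)"
      unfolding braket_def tilde_vertices_def
      by (rule sum.union_disjoint) (use fin d in auto)
    also have "(\<Sum>w\<in>Inl ` (V - {u}). cnj (clique_vec ut w) * lift_vec u ut x w) = 0"
      by (auto simp: clique_vec_def intro!: sum.neutral)
    also have "(\<Sum>w\<in>Inr ` {..<k}. cnj (clique_vec ut w) * lift_vec u ut x w)
        = (\<Sum>i<k. x u * (cnj (ut i) * ut i))"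
      by (subst sum.reindex) (auto simp: inj_on_def lift_vec_def clique_vec_def intro!: sum.cong)
    also have "\<dots> = x u * (\<Sum>i<k. cnj (ut i) * ut i)"
      by (simp add: sum_distrib_left)
    also have "(\<Sum>i<k. cnj (ut i) * ut i) = (\<Sum>i<k. complex_of_real ((cmod (ut i))\<^sup>2))"
      by (intro sum.cong refl) (metis complex_norm_square mult.commute of_real_power)
    also have "\<dots> = 1" using ut_unit by (metis of_real_1 of_real_sum)
    finally show ?thesis by simp
  qed
  have sq: "(\<Sum>i<k. (cmod (lift_vec u ut x (Inr i)))\<^sup>2) = (cmod (x u))\<^sup>2" for x
  proof -
    have "(\<Sum>i<k. (cmod (lift_vec u ut x (Inr i)))\<^sup>2) = (\<Sum>i<k. (cmod (x u))\<^sup>2 * (cmod (ut i))\<^sup>2)"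
      by (simp add: lift_vec_def norm_mult power_mult_distrib)
    also have "\<dots> = (cmod (x u))\<^sup>2" using ut_unit by (simp add: sum_distrib_left[symmetric])
    finally show ?thesis .
  qed
  show ?thesis
    unfolding T_def[symmetric] key cl sq by (auto simp: lift_vec_def)
qed

end
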